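(* Let $\lambda>0$, let $\Theta$ be a set (of market scenarios), and let $\eta:\mathbb{R}^n\times\Theta\to\mathbb{R}$, $\xi:\mathbb{R}^n\times\Theta\to\mathbb{R}^n$ be given. For $\alpha\in\mathbb{R}^n$, $\theta\in\Theta$ and a function $\psi(t,x)$ of class $C^{1,2}$ define $$\mathcal{L}^{\alpha,\theta}\psi(t,x)=\psi_t(t,x)+\eta(\alpha,\theta)\psi_x(t,x)+\tfrac12\|\xi(\alpha,\theta)\|_2^2\,\psi_{xx}(t,x),\qquad \mathcal{H}^{\alpha,\theta}\psi(t,x)=\|\xi(\alpha,\theta)\|_2^2\,\psi_x^2(t,x).$$ Let $\hat\alpha(t,x)\in\mathbb{R}^n$ and $\hat\theta(t,x)\in\Theta$ be given (feedback) functions. Consider System (I) for $(V,g)$: $$\sup_{\alpha\in\mathbb{R}^n}\inf_{\theta\in\Theta}\{\mathcal{L}^{\alpha,\theta}V(t,x)-\lambda\mathcal{H}^{\alpha,\theta}g(t,x)\}=\mathcal{L}^{\hat\alpha,\hat\theta}V(t,x)-\lambda\mathcal{H}^{\hat\alpha,\hat\theta}g(t,x)=0,\quad \mathcal{L}^{\hat\alpha,\hat\theta}g(t,x)=0,\quad V(T,x)=x,\quad g(T,x)=x,$$ and System (II) for $(f,g)$: $$\sup_{\alpha\in\mathbb{R}^n}\inf_{\theta\in\Theta}\{\mathcal{L}^{\alpha,\theta}f(t,x)+2\lambda g(t,x)\mathcal{L}^{\alpha,\theta}g(t,x)\}=\mathcal{L}^{\hat\alpha,\hat\theta}f(t,x)+2\lambda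 g(t,x)\mathcal{L}^{\hat\alpha,\hat\theta}g(t,x)=0,$$ $$\mathcal{L}^{\hat\alpha,\hat\theta}f(t,x)=0,\quad \mathcal{L}^{\hat\alpha,\hat\theta}g(t,x)=0,\quad f(T,x)=x-\lambda x^2,\quad g(T,x)=x.$$ Then: (1) if $(V,g)$ is a solution of System (I) with $V,g\in C^{1,2}$ in $(t,x)$, then $(f,g)$ with $f:=V-\lambda g^2$ is a solution of System (II); (2) if $(f,g)$ is a solution of System (II) with $f,g\in C^{1,2}$ in $(t,x)$, then $(V,g)$ with $V:=f+\lambda g^2$ is a solution of System (I).
   Context: These PDE systems arise from the robust dynamic mean-variance problem with wealth dynamics $dX_s=\eta(\alpha_s,\theta_s)ds+\xi(\alpha_s,\theta_s)\cdot d\mathcal{B}_s$ on $[t,T]$ and objective $E_t[X_T]-\lambda\,\mathrm{Var}_t(X_T)$; $\hat\alpha$ is a candidate equilibrium strategy and $\hat\theta$ the corresponding worst-case scenario. *)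

theory Defs
  imports "HOL-Analysis.Analysis"
begin

definition pt :: "(real \<Rightarrow> real \<Rightarrow> real) \<Rightarrow> real \<Rightarrow> real \<Rightarrow> real" where
  "pt \<psi> t x = deriv (\<lambda>s. \<psi> s x) t"

definition px :: "(real \<Rightarrow> real \<Rightarrow> real) \<Rightarrow> real \<Rightarrow> real \<Rightarrow> real" where
  "px \<psi> t x = deriv (\<lambda>y. \<psi> t y) x"

definition pxx :: "(real \<Rightarrow> real \<Rightarrow> real) \<Rightarrow> real \<Rightarrow> real \<Rightarrow> real" where
  "pxx \<psi> t x = deriv (\<lambda>y. px \<psi> t y) x"

definition C12_on :: "(real \<times> real) set \<Rightarrow> (real \<Rightarrow> real \<Rightarrow> real) \<Rightarrow> bool" where
  "C12_on D \<psi> \<longleftrightarrow>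
     (\<forall>(t,x)\<in>D. (\<lambda>s. \<psi> s x) differentiable (at t)
                 \<and> (\<lambda>y. \<psi> t y) differentiable (at x)
                 \<and> (\<lambda>y. px \<psi> t y) differentiable (at x))
   \<and> continuous_on D (\<lambda>(t,x). \<psi> t x)
   \<and> continuous_on D (\<lambda>(t,x). pt \<psi> t x)
   \<and> continuous_on D (\<lambda>(t,x). px \<psi> t x)
   \<and> continuous_on D (\<lambda>(t,x). pxx \<psi> t x)"

definition LL :: "('a \<Rightarrow> 'th \<Rightarrow> real) \<Rightarrow> ('a \<Rightarrow> 'th \<Rightarrow> real^'n) \<Rightarrow> 'a \<Rightarrow> 'th
    \<Rightarrow> (real \<Rightarrow> real \<Rightarrow> real) \<Rightarrow> real \<Rightarrow> real \<Rightarrow> real" where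
  "LL \<eta> \<xi> a th \<psi> t x = pt \<psi> t x + \<eta> a th * px \<psi> t x
      + (1/2) * (norm (\<xi> a th))\<^sup>2 * pxx \<psi> t x"

definition HH :: "('a \<Rightarrow> 'th \<Rightarrow> real^'n) \<Rightarrow> 'a \<Rightarrow> 'th
    \<Rightarrow> (real \<Rightarrow> real \<Rightarrow> real) \<Rightarrow> real \<Rightarrow> real \<Rightarrow> real" where
  "HH \<xi> a th \<psi> t x = (norm (\<xi> a th))\<^sup>2 * (px \<psi> t x)\<^sup>2"

definition SystemI ::
  "real \<Rightarrow> real \<Rightarrow> 'th set \<Rightarrow> (real^'n \<Rightarrow> 'th \<Rightarrow> real) \<Rightarrow> (real^'n \<Rightarrow> 'th \<Rightarrow> real^'n)
   \<Rightarrow> (real \<Rightarrow> real \<Rightarrow> real^'n) \<Rightarrow> (real \<Rightarrow> real \<Rightarrow> 'th)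
   \<Rightarrow> (real \<Rightarrow> real \<Rightarrow> real) \<Rightarrow> (real \<Rightarrow> real \<Rightarrow> real) \<Rightarrow> bool" where
  "SystemI lam T \<Theta> \<eta> \<xi> ah thh V g \<longleftrightarrow>
     (\<forall>t\<in>{0<..<T}. \<forall>x.
        (SUP a. INF th\<in>\<Theta>. ereal (LL \<eta> \<xi> a th V t x - lam * HH \<xi> a th g t x))
          = ereal (LL \<eta> \<xi> (ah t x) (thh t x) V t x - lam * HH \<xi> (ah t x) (thh t x) g t x)
      \<and> LL \<eta> \<xi> (ah t x) (thh t x) V t x - lam * HH \<xi> (ah t x) (thh t x) g t x = 0
      \<and> LL \<eta> \<xi> (ah t x) (thh t x) g t x = 0)
   \<and> (\<forall>x. V T x = x) \<and> (\<forall>x. g T x = x)"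

definition SystemII ::
  "real \<Rightarrow> real \<Rightarrow> 'th set \<Rightarrow> (real^'n \<Rightarrow> 'th \<Rightarrow> real) \<Rightarrow> (real^'n \<Rightarrow> 'th \<Rightarrow> real^'n)
   \<Rightarrow> (real \<Rightarrow> real \<Rightarrow> real^'n) \<Rightarrow> (real \<Rightarrow> real \<Rightarrow> 'th)
   \<Rightarrow> (real \<Rightarrow> real \<Rightarrow> real) \<Rightarrow> (real \<Rightarrow> real \<Rightarrow> real) \<Rightarrow> bool" where
  "SystemII lam T \<Theta> \<eta> \<xi> ah thh f g \<longleftrightarrow>
     (\<forall>t\<in>{0<..<T}. \<forall>x.
        (SUP a. INF th\<in>\<Theta>. ereal (LL \<eta> \<xi> a th f t x + 2 * lam * g t x * LL \<eta> \<xi> a th g t x))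
          = ereal (LL \<eta> \<xi> (ah t x) (thh t x) f t x
                   + 2 * lam * g t x * LL \<eta> \<xi> (ah t x) (thh t x) g t x)
      \<and> LL \<eta> \<xi> (ah t x) (thh t x) f t x
          + 2 * lam * g t x * LL \<eta> \<xi> (ah t x) (thh t x) g t x = 0
      \<and> LL \<eta> \<xi> (ah t x) (thh t x) f t x = 0
      \<and> LL \<eta> \<xi> (ah t x) (thh t x) g t x = 0)
   \<and> (\<forall>x. f T x = x - lam * x\<^sup>2) \<and> (\<forall>x. g T x = x)"

end

theory Submission
  imports Defs
begin

lemma deriv_comb:
  fixes f g :: "real \<Rightarrow> real"
  assumes "f differentiable at t" "g differentiable at t"
  shows "deriv (\<lambda>s. f s + c * (g s)\<^sup>2) t = deriv f t + c * (2 * g t * deriv g t)"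
proof -
  have f: "(f has_real_derivative deriv f t) (at t)" and g: "(g has_real_derivative deriv g t) (at t)"
    using assms DERIV_deriv_iff_real_differentiable by blast+
  have "((\<lambda>s. f s + c * (g s)\<^sup>2) has_real_derivative deriv f t + c * (2 * g t * deriv g t)) (at t)"
    by (auto intro!: derivative_eq_intros f g)
  then show ?thesis by (rule DERIV_imp_deriv)
qed

lemma deriv_prod2:
  fixes f g h :: "real \<Rightarrow> real"
  assumes "f differentiable at t" "g differentiable at t" "h differentiable at t"
  shows "deriv (\<lambda>s. f s + c * (2 * g s * h s)) t
     = deriv f t + c * (2 * (deriv g t * h t + g t * deriv h t))"
proof -
  have f: "(f has_real_derivative deriv f t) (at t)" and g: "(g has_real_derivative deriv g t) (at t)"
    and h: "(h has_real_derivative deriv h t) (at t)"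
    using assms DERIV_deriv_iff_real_differentiable by blast+
  have "((\<lambda>s. f s + c * (2 * g s * h s)) has_real_derivative
      deriv f t + c * (2 * (deriv g t * h t + g t * deriv h t))) (at t)"
    by (auto intro!: derivative_eq_intros f g h simp: algebra_simps)
  then show ?thesis by (rule DERIV_imp_deriv)
qed

lemma LL_comb:
  fixes \<eta> :: "'a \<Rightarrow> 'th \<Rightarrow> real" and \<xi> :: "'a \<Rightarrow> 'th \<Rightarrow> real^'n"
  assumes V: "C12_on ({0<..<T} \<times> UNIV) V" and g: "C12_on ({0<..<T} \<times> UNIV) g"
    and t: "t \<in> {0<..<T}"
  shows "LL \<eta> \<xi> a th (\<lambda>t x. V t x + c * (g t x)\<^sup>2) t x
      = LL \<eta> \<xi> a th V t x + c * (2 * g t x * LL \<eta> \<xi> a th g t x + HH \<xi> a th g t x)"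
proof -
  have d: "\<And>y. (\<lambda>s. V s y) differentiable (at t) \<and> (\<lambda>y. V t y) differentiable (at y)
                 \<and> (\<lambda>y. px V t y) differentiable (at y)"
          "\<And>y. (\<lambda>s. g s y) differentiable (at t) \<and> (\<lambda>y. g t y) differentiable (at y)
                 \<and> (\<lambda>y. px g t y) differentiable (at y)"
    using V g t unfolding C12_on_def by auto
  have ptF: "pt (\<lambda>t x. V t x + c * (g t x)\<^sup>2) t x = pt V t x + c * (2 * g t x * pt g t x)"
    unfolding pt_def using d by (simp add: deriv_comb)
  have pxF: "\<And>y. px (\<lambda>t x. V t x + c * (g t x)\<^sup>2) t y = px V t y + c * (2 * g t y * px g t y)"
    unfolding px_def using d by (simp add: deriv_comb)
  have pxxF: "pxx (\<lambda>t x. V t x + c * (g t x)\<^sup>2) t x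
     = pxx V t x + c * (2 * (px g t x * px g t x + g t x * pxx g t x))"
    unfolding pxx_def pxF
    using deriv_prod2[of "\<lambda>y. px V t y" x "\<lambda>y. g t y" "\<lambda>y. px g t y" c] d
    by (simp add: px_def[symmetric])
  show ?thesis unfolding LL_def HH_def ptF pxF pxxF
    by (simp add: algebra_simps power2_eq_square)
qed

theorem proposition1:
  fixes lam T :: real and \<Theta> :: "'th set"
    and \<eta> :: "real^'n \<Rightarrow> 'th \<Rightarrow> real" and \<xi> :: "real^'n \<Rightarrow> 'th \<Rightarrow> real^'n"
    and ah :: "real \<Rightarrow> real \<Rightarrow> real^'n" and thh :: "real \<Rightarrow> real \<Rightarrow> 'th"
  assumes "lam > 0"
    and "\<And>t x. thh t x \<in> \<Theta>"
  shows "(\<forall>V g. C12_on ({0<..<T} \<times> UNIV) V \<and> C12_on ({0<..<T} \<times> UNIV) g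
              \<and> SystemI lam T \<Theta> \<eta> \<xi> ah thh V g
            \<longrightarrow> SystemII lam T \<Theta> \<eta> \<xi> ah thh (\<lambda>t x. V t x - lam * (g t x)\<^sup>2) g)
       \<and> (\<forall>f g. C12_on ({0<..<T} \<times> UNIV) f \<and> C12_on ({0<..<T} \<times> UNIV) g
              \<and> SystemII lam T \<Theta> \<eta> \<xi> ah thh f g
            \<longrightarrow> SystemI lam T \<Theta> \<eta> \<xi> ah thh (\<lambda>t x. f t x + lam * (g t x)\<^sup>2) g)"
proof (intro conjI allI impI)
  fix V g assume A: "C12_on ({0<..<T} \<times> UNIV) V \<and> C12_on ({0<..<T} \<times> UNIV) g
              \<and> SystemI lam T \<Theta> \<eta> \<xi> ah thh V g"
  have eqf: "(\<lambda>t x. V t x - lam * (g t x)\<^sup>2) = (\<lambda>t x. V t x + (-lam) * (g t x)\<^sup>2)" by simp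
  have key: "\<And>a th t x. t \<in> {0<..<T} \<Longrightarrow>
     LL \<eta> \<xi> a th (\<lambda>t x. V t x - lam * (g t x)\<^sup>2) t x + 2 * lam * g t x * LL \<eta> \<xi> a th g t x
     = LL \<eta> \<xi> a th V t x - lam * HH \<xi> a th g t x"
    unfolding eqf using A by (subst LL_comb) (auto simp: algebra_simps)
  have key2: "\<And>a th t x. t \<in> {0<..<T} \<Longrightarrow>
     LL \<eta> \<xi> a th (\<lambda>t x. V t x - lam * (g t x)\<^sup>2) t x
     = (LL \<eta> \<xi> a th V t x - lam * HH \<xi> a th g t x) - 2 * lam * g t x * LL \<eta> \<xi> a th g t x"
    using key by (simp add: algebra_simps)
  show "SystemII lam T \<Theta> \<eta> \<xi> ah thh (\<lambda>t x. V t x - lam * (g t x)\<^sup>2) g"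
    using A unfolding SystemII_def SystemI_def by (simp add: key key2)
next
  fix f g assume A: "C12_on ({0<..<T} \<times> UNIV) f \<and> C12_on ({0<..<T} \<times> UNIV) g
              \<and> SystemII lam T \<Theta> \<eta> \<xi> ah thh f g"
  have key: "\<And>a th t x. t \<in> {0<..<T} \<Longrightarrow>
     LL \<eta> \<xi> a th (\<lambda>t x. f t x + lam * (g t x)\<^sup>2) t x - lam * HH \<xi> a th g t x
     = LL \<eta> \<xi> a th f t x + 2 * lam * g t x * LL \<eta> \<xi> a th g t x"
    using A by (subst LL_comb) (auto simp: algebra_simps)
  show "SystemI lam T \<Theta> \<eta> \<xi> ah thh (\<lambda>t x. f t x + lam * (g t x)\<^sup>2) g"
    using A unfolding SystemII_def SystemI_def by (simp add: key)
qed

end
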